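(* Let $t_1e_{\gamma_1},\dots,t_se_{\gamma_s}$ (with $t_i\in\mathbb{T}^n$, $\gamma_i\in\{1,\dots,r\}$) and $c_1,\dots,c_s\in K\setminus\{0\}$ be given, and let $\Sigma''$ be the set of critical syzygies obtained by applying Rules 1 and 2 below. Then the set $\widetilde{\Sigma}=\{-c_j\cdot\sigma_{ij}\mid \sigma_{ij}\in\Sigma''\}$ is the reduced $\tau$-Gröbner basis of the module $\mathrm{Syz}_P(c_1t_1e_{\gamma_1},\dots,c_st_se_{\gamma_s})$.
   Context: $K$ is a field, $P=K[x_1,\dots,x_n]$ is positively graded by $W\in\mathrm{Mat}_{m,n}(\mathbb{Z})$ (i.e. $\deg_W(x_1^{\alpha_1}\cdots x_n^{\alpha_n})=W\cdot(\alpha_1,\dots,\alpha_n)^{\mathrm{tr}}$, $\mathrm{rk}(W)=m$, no zero column, first non-zero entry of each column positive), $\mathbb{T}^n$ is the set of terms of $P$, $F=\bigoplus_{i=1}^rP(-\delta_i)$ has basis $e_1,\dots,e_r$, and $\sigma$ is a module term ordering on $\mathbb{T}^n\langle e_1,\dots,e_r\rangle$. Let $d_i=\deg_W(t_ie_{\gamma_i})=\deg_W(t_i)+\delta_{\gamma_i}$ and $F'=\bigoplus_{i=1}^sP(-d_i)$ with canonical basis $\epsilon_1,\dots,\epsilon_s$. $\mathrm{Syz}_P(c_1t_1e_{\gamma_1},\dots,c_st_se_{\gamma_s})$ is the submodule of $F'$ of all $\sum f_i\epsilon_i$ with $\sum f_ic_it_ie_{\gamma_i}=0$. The ordering $\tau$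 on $\mathbb{T}^n\langle\epsilon_1,\dots,\epsilon_s\rangle$ is defined by $t\epsilon_i\ge_\tau t'\epsilon_j$ iff $tt_ie_{\gamma_i}>_\sigma t't_je_{\gamma_j}$, or $tt_ie_{\gamma_i}=t't_je_{\gamma_j}$ and $i\ge j$; it is a module term ordering. For $i,j$ with $\gamma_i=\gamma_j$ let $\sigma_{ij}=\frac{\mathrm{lcm}(t_i,t_j)}{c_it_i}\epsilon_i-\frac{\mathrm{lcm}(t_i,t_j)}{c_jt_j}\epsilon_j$ and $t_{ij}=\mathrm{lcm}(t_i,t_j)/t_i$. $\Sigma=\{\sigma_{ij}\mid 1\le i<j\le s,\ \gamma_i=\gamma_j\}$ is the set of critical syzygies. Rule 1: delete from $\Sigma$ all $\sigma_{jk}$ for which there is an index $i\in\{1,\dots,j-1\}$ (with $\gamma_i=\gamma_k$) such that $t_{ki}$ divides $t_{kj}$; call the result $\Sigma'$. Rule 2: delete from $\Sigma'$ all $\sigma_{ik}$ for which there is an index $j\in\{i+1,\dots,k-1\}$ (with $\gamma_j=\gamma_k$) such that $t_{kj}$ properly divides $t_{ki}$; call the result $\Sigma''$. *)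

theory Defs
  imports Main
begin

(* Terms of P = K[x_1..x_n] are exponent vectors  nat => nat  (variable x_{k+1}
   corresponds to index k); a term is valid iff all exponents at indices >= n vanish. *)

definition valid_term :: "nat \<Rightarrow> (nat \<Rightarrow> nat) \<Rightarrow> bool" where
  "valid_term n t \<longleftrightarrow> (\<forall>x\<ge>n. t x = 0)"

definition tmul :: "(nat \<Rightarrow> nat) \<Rightarrow> (nat \<Rightarrow> nat) \<Rightarrow> (nat \<Rightarrow> nat)" where
  "tmul t u = (\<lambda>x. t x + u x)"

definition tdvd :: "(nat \<Rightarrow> nat) \<Rightarrow> (nat \<Rightarrow> nat) \<Rightarrow> bool" where
  "tdvd t u \<longleftrightarrow> (\<forall>x. t x \<le> u x)"

(* quotient u / t (meaningful when t divides u) *)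
definition tquot :: "(nat \<Rightarrow> nat) \<Rightarrow> (nat \<Rightarrow> nat) \<Rightarrow> (nat \<Rightarrow> nat)" where
  "tquot u t = (\<lambda>x. u x - t x)"

definition tlcm :: "(nat \<Rightarrow> nat) \<Rightarrow> (nat \<Rightarrow> nat) \<Rightarrow> (nat \<Rightarrow> nat)" where
  "tlcm t u = (\<lambda>x. max (t x) (u x))"

definition tone :: "nat \<Rightarrow> nat" where
  "tone = (\<lambda>x. 0)"

(* Module terms t e_k are pairs (t, k). *)
type_synonym mterm = "(nat \<Rightarrow> nat) \<times> nat"

definition mdvd :: "mterm \<Rightarrow> mterm \<Rightarrow> bool" where
  "mdvd a b \<longleftrightarrow> snd a = snd b \<and> tdvd (fst a) (fst b)"

definition mterms :: "nat \<Rightarrow> nat \<Rightarrow> mterm set" where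
  "mterms n r = {(t, k). valid_term n t \<and> k \<in> {1..r}}"

definition module_term_ordering :: "nat \<Rightarrow> nat \<Rightarrow> (mterm \<Rightarrow> mterm \<Rightarrow> bool) \<Rightarrow> bool" where
  "module_term_ordering n r le \<longleftrightarrow>
     (\<forall>a\<in>mterms n r. le a a) \<and>
     (\<forall>a\<in>mterms n r. \<forall>b\<in>mterms n r. le a b \<and> le b a \<longrightarrow> a = b) \<and>
     (\<forall>a\<in>mterms n r. \<forall>b\<in>mterms n r. \<forall>c\<in>mterms n r. le a b \<and> le b c \<longrightarrow> le a c) \<and>
     (\<forall>a\<in>mterms n r. \<forall>b\<in>mterms n r. le a b \<or> le b a) \<and>
     (\<forall>a\<in>mterms n r. \<forall>b\<in>mterms n r. \<forall>t. valid_term n t \<longrightarrow> le a b \<longrightarrow>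
         le (tmul t (fst a), snd a) (tmul t (fst b), snd b)) \<and>
     (\<forall>a\<in>mterms n r. le (tone, snd a) a)"

definition tau_le :: "(mterm \<Rightarrow> mterm \<Rightarrow> bool) \<Rightarrow> (nat \<Rightarrow> nat \<Rightarrow> nat) \<Rightarrow> (nat \<Rightarrow> nat)
    \<Rightarrow> mterm \<Rightarrow> mterm \<Rightarrow> bool" where
  "tau_le le t gam a b \<longleftrightarrow>
     (let A = (tmul (fst a) (t (snd a)), gam (snd a));
          B = (tmul (fst b) (t (snd b)), gam (snd b))
      in (le A B \<and> A \<noteq> B) \<or> (A = B \<and> snd a \<le> snd b))"

(* Elements of F' = (+)_{i=1..s} P(-d_i): maps m from module terms (u, i) to coefficients;
   m (u, i) is the coefficient of u eps_i. *)
definition in_Fprime :: "nat \<Rightarrow> nat \<Rightarrow> (mterm \<Rightarrow> 'a::zero) \<Rightarrow> bool" where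
  "in_Fprime n s m \<longleftrightarrow> finite {v. m v \<noteq> 0} \<and>
     (\<forall>u i. m (u, i) \<noteq> 0 \<longrightarrow> valid_term n u \<and> i \<in> {1..s})"

(* Syz_P(c_1 t_1 e_{gamma_1}, ..., c_s t_s e_{gamma_s}): the coefficient of u e_k in
   sum_i m_i c_i t_i e_{gamma_i} must vanish for all u, k. *)
definition Syz :: "nat \<Rightarrow> nat \<Rightarrow> (nat \<Rightarrow> nat \<Rightarrow> nat) \<Rightarrow> (nat \<Rightarrow> nat) \<Rightarrow> (nat \<Rightarrow> 'a::field)
    \<Rightarrow> (mterm \<Rightarrow> 'a) set" where
  "Syz n s t gam c = {m. in_Fprime n s m \<and>
     (\<forall>u k. (\<Sum>i\<in>{i\<in>{1..s}. gam i = k \<and> tdvd (t i) u}. m (tquot u (t i), i) * c i) = 0)}"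

definition LT :: "(mterm \<Rightarrow> mterm \<Rightarrow> bool) \<Rightarrow> (mterm \<Rightarrow> 'a::zero) \<Rightarrow> mterm" where
  "LT tle m = (THE v. m v \<noteq> 0 \<and> (\<forall>w. m w \<noteq> 0 \<longrightarrow> tle w v))"

definition LC :: "(mterm \<Rightarrow> mterm \<Rightarrow> bool) \<Rightarrow> (mterm \<Rightarrow> 'a::zero) \<Rightarrow> 'a" where
  "LC tle m = m (LT tle m)"

definition is_GB :: "(mterm \<Rightarrow> mterm \<Rightarrow> bool) \<Rightarrow> (mterm \<Rightarrow> 'a::zero) set \<Rightarrow> (mterm \<Rightarrow> 'a) set \<Rightarrow> bool" where
  "is_GB tle M G \<longleftrightarrow> finite G \<and> G \<subseteq> M \<and> (\<forall>g\<in>G. g \<noteq> (\<lambda>_. 0)) \<and>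
     (\<forall>m\<in>M. m \<noteq> (\<lambda>_. 0) \<longrightarrow> (\<exists>g\<in>G. mdvd (LT tle g) (LT tle m)))"

definition in_LT_module :: "(mterm \<Rightarrow> mterm \<Rightarrow> bool) \<Rightarrow> (mterm \<Rightarrow> 'a::zero) set \<Rightarrow> mterm \<Rightarrow> bool" where
  "in_LT_module tle M v \<longleftrightarrow> (\<exists>m\<in>M. m \<noteq> (\<lambda>_. 0) \<and> mdvd (LT tle m) v)"

(* Reduced Groebner basis (Kreuzer-Robbiano Def. 2.4.12): Groebner basis, monic,
   leading terms form a minimal system of generators of LT(M), and
   Supp(g - LT(g)) \<inter> LT(M) = {} for every g. *)
definition is_reduced_GB :: "(mterm \<Rightarrow> mterm \<Rightarrow> bool) \<Rightarrow> (mterm \<Rightarrow> 'a::field) set \<Rightarrow> (mterm \<Rightarrow> 'a) set \<Rightarrow> bool" where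
  "is_reduced_GB tle M G \<longleftrightarrow> is_GB tle M G \<and>
     (\<forall>g\<in>G. LC tle g = 1) \<and>
     (\<forall>g\<in>G. \<forall>g'\<in>G. g \<noteq> g' \<longrightarrow> \<not> mdvd (LT tle g') (LT tle g)) \<and>
     (\<forall>g\<in>G. \<forall>v. g v \<noteq> 0 \<and> v \<noteq> LT tle g \<longrightarrow> \<not> in_LT_module tle M v)"

definition tij :: "(nat \<Rightarrow> nat \<Rightarrow> nat) \<Rightarrow> nat \<Rightarrow> nat \<Rightarrow> (nat \<Rightarrow> nat)" where
  "tij t i j = tquot (tlcm (t i) (t j)) (t i)"

(* critical syzygy sigma_{ij} = lcm(t_i,t_j)/(c_i t_i) eps_i - lcm(t_i,t_j)/(c_j t_j) eps_j *)
definition crit_syz :: "(nat \<Rightarrow> nat \<Rightarrow> nat) \<Rightarrow> (nat \<Rightarrow> 'a::field) \<Rightarrow> nat \<Rightarrow> nat \<Rightarrow> (mterm \<Rightarrow> 'a)" where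
  "crit_syz t c i j = (\<lambda>(u, k).
     (if k = i \<and> u = tij t i j then 1 / c i else 0) - (if k = j \<and> u = tij t j i then 1 / c j else 0))"

definition rule1_del :: "(nat \<Rightarrow> nat \<Rightarrow> nat) \<Rightarrow> (nat \<Rightarrow> nat) \<Rightarrow> nat \<Rightarrow> nat \<Rightarrow> bool" where
  "rule1_del t gam j k \<longleftrightarrow> (\<exists>i\<in>{1..<j}. gam i = gam k \<and> tdvd (tij t k i) (tij t k j))"

definition rule2_del :: "(nat \<Rightarrow> nat \<Rightarrow> nat) \<Rightarrow> (nat \<Rightarrow> nat) \<Rightarrow> nat \<Rightarrow> nat \<Rightarrow> bool" where
  "rule2_del t gam i k \<longleftrightarrow>
     (\<exists>j\<in>{i<..<k}. gam j = gam k \<and> tdvd (tij t k j) (tij t k i) \<and> tij t k j \<noteq> tij t k i)"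

definition Sigma0 :: "nat \<Rightarrow> (nat \<Rightarrow> nat) \<Rightarrow> (nat \<times> nat) set" where
  "Sigma0 s gam = {(i, j). 1 \<le> i \<and> i < j \<and> j \<le> s \<and> gam i = gam j}"

definition Sigma1 :: "nat \<Rightarrow> (nat \<Rightarrow> nat \<Rightarrow> nat) \<Rightarrow> (nat \<Rightarrow> nat) \<Rightarrow> (nat \<times> nat) set" where
  "Sigma1 s t gam = {(j, k) \<in> Sigma0 s gam. \<not> rule1_del t gam j k}"

definition Sigma2 :: "nat \<Rightarrow> (nat \<Rightarrow> nat \<Rightarrow> nat) \<Rightarrow> (nat \<Rightarrow> nat) \<Rightarrow> (nat \<times> nat) set" where
  "Sigma2 s t gam = {(i, k) \<in> Sigma1 s t gam. \<not> rule2_del t gam i k}"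

end

theory Submission
  imports Defs
begin



lemma tmul_tquot: "tdvd b a \<Longrightarrow> tmul (tquot a b) b = a"
  by (auto simp: tmul_def tquot_def tdvd_def fun_eq_iff)
lemma tquot_tmul: "tquot (tmul u b) b = u"
  by (auto simp: tmul_def tquot_def fun_eq_iff)
lemma tmul_cancel: "tmul u b = tmul v b \<Longrightarrow> u = v"
  by (auto simp: tmul_def fun_eq_iff)
lemma valid_tmul: "valid_term n a \<Longrightarrow> valid_term n b \<Longrightarrow> valid_term n (tmul a b)"
  by (auto simp: valid_term_def tmul_def)
lemma valid_tquot: "valid_term n a \<Longrightarrow> valid_term n (tquot a b)"
  by (auto simp: valid_term_def tquot_def)
lemma valid_tlcm: "valid_term n a \<Longrightarrow> valid_term n b \<Longrightarrow> valid_term n (tlcm a b)"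
  by (auto simp: valid_term_def tlcm_def)
lemma tdvd_tmul: "tdvd b (tmul u b)"
  by (auto simp: tdvd_def tmul_def)

lemma img_mterms:
  assumes vt: "\<forall>i\<in>{1..s}. valid_term n (t i)" and vg: "\<forall>i\<in>{1..s}. gam i \<in> {1..r}"
    and "valid_term n u" "i \<in> {1..s}"
  shows "(tmul u (t i), gam i) \<in> mterms n r"
  using assms by (auto simp: mterms_def intro: valid_tmul)

lemma tle_antisym:
  assumes mto: "module_term_ordering n r le"
    and vt: "\<forall>i\<in>{1..s}. valid_term n (t i)" and vg: "\<forall>i\<in>{1..s}. gam i \<in> {1..r}"
    and a: "valid_term n u" "i \<in> {1..s}" and b: "valid_term n v" "j \<in> {1..s}"
    and "tau_le le t gam (u,i) (v,j)" "tau_le le t gam (v,j) (u,i)"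
  shows "(u,i) = (v,j)"
proof -
  have A: "(tmul u (t i), gam i) \<in> mterms n r" using img_mterms[OF vt vg a] .
  have B: "(tmul v (t j), gam j) \<in> mterms n r" using img_mterms[OF vt vg b] .
  have as: "\<forall>a\<in>mterms n r. \<forall>b\<in>mterms n r. le a b \<and> le b a \<longrightarrow> a = b"
    using mto unfolding module_term_ordering_def by blast
  define X where "X = (tmul u (t i), gam i)"
  define Y where "Y = (tmul v (t j), gam j)"
  have h1: "(le X Y \<and> X \<noteq> Y) \<or> (X = Y \<and> i \<le> j)"
    using assms(8) unfolding tau_le_def Let_def X_def Y_def by simp
  have h2: "(le Y X \<and> Y \<noteq> X) \<or> (Y = X \<and> j \<le> i)"
    using assms(9) unfolding tau_le_def Let_def X_def Y_def by simp
  have "X = Y \<and> i = j"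
  proof -
    { assume "le X Y" "le Y X"
      then have "X = Y" using as A B unfolding X_def Y_def by blast }
    then show ?thesis using h1 h2 by auto
  qed
  then have "i = j \<and> tmul u (t i) = tmul v (t j)" unfolding X_def Y_def by (simp only: prod.inject) blast
  then show ?thesis using tmul_cancel by auto
qed

lemma tle_trans:
  assumes mto: "module_term_ordering n r le"
    and vt: "\<forall>i\<in>{1..s}. valid_term n (t i)" and vg: "\<forall>i\<in>{1..s}. gam i \<in> {1..r}"
    and a: "valid_term n u" "i \<in> {1..s}" and b: "valid_term n v" "j \<in> {1..s}"
    and c: "valid_term n w" "k \<in> {1..s}"
    and "tau_le le t gam (u,i) (v,j)" "tau_le le t gam (v,j) (w,k)"
  shows "tau_le le t gam (u,i) (w,k)"
proof -
  have A: "(tmul u (t i), gam i) \<in> mterms n r" using img_mterms[OF vt vg a] .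
  have B: "(tmul v (t j), gam j) \<in> mterms n r" using img_mterms[OF vt vg b] .
  have C: "(tmul w (t k), gam k) \<in> mterms n r" using img_mterms[OF vt vg c] .
  have as: "\<forall>a\<in>mterms n r. \<forall>b\<in>mterms n r. le a b \<and> le b a \<longrightarrow> a = b"
    using mto unfolding module_term_ordering_def by blast
  have tr: "\<forall>a\<in>mterms n r. \<forall>b\<in>mterms n r. \<forall>c\<in>mterms n r. le a b \<and> le b c \<longrightarrow> le a c"
    using mto unfolding module_term_ordering_def by blast
  define A where "A = (tmul u (t i), gam i)"
  define B where "B = (tmul v (t j), gam j)"
  define C where "C = (tmul w (t k), gam k)"
  have h1: "(le A B \<and> A \<noteq> B) \<or> (A = B \<and> i \<le> j)"
    using assms(10) unfolding tau_le_def Let_def A_def B_def by simp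
  have h2: "(le B C \<and> B \<noteq> C) \<or> (B = C \<and> j \<le> k)"
    using assms(11) unfolding tau_le_def Let_def B_def C_def by simp
  have "(le A C \<and> A \<noteq> C) \<or> (A = C \<and> i \<le> k)"
  proof -
    { assume x: "le A B" "A \<noteq> B" "le B C" "B \<noteq> C"
      have "le A C" using tr A B C x unfolding A_def B_def C_def by blast
      moreover have "A \<noteq> C"
      proof
        assume "A = C"
        then have "le B A" using x by simp
        then show False using as A B x unfolding A_def B_def by blast
      qed
      ultimately have ?thesis by blast }
    then show ?thesis using h1 h2 by auto
  qed
  then show ?thesis unfolding tau_le_def Let_def A_def C_def by simp
qed

lemma tle_total:
  assumes mto: "module_term_ordering n r le"
    and vt: "\<forall>i\<in>{1..s}. valid_term n (t i)" and vg: "\<forall>i\<in>{1..s}. gam i \<in> {1..r}"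
    and a: "valid_term n u" "i \<in> {1..s}" and b: "valid_term n v" "j \<in> {1..s}"
  shows "tau_le le t gam (u,i) (v,j) \<or> tau_le le t gam (v,j) (u,i)"
proof -
  have A: "(tmul u (t i), gam i) \<in> mterms n r" using img_mterms[OF vt vg a] .
  have B: "(tmul v (t j), gam j) \<in> mterms n r" using img_mterms[OF vt vg b] .
  have to: "\<forall>a\<in>mterms n r. \<forall>b\<in>mterms n r. le a b \<or> le b a"
    using mto unfolding module_term_ordering_def by blast
  have "le (tmul u (t i), gam i) (tmul v (t j), gam j) \<or> le (tmul v (t j), gam j) (tmul u (t i), gam i)"
    using to A B by blast
  then show ?thesis unfolding tau_le_def Let_def fst_conv snd_conv
    by (cases "(tmul u (t i), gam i) = (tmul v (t j), gam j)"; cases "i \<le> j") auto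
qed

lemma finite_max:
  assumes "finite S" "S \<noteq> {}" "\<forall>a\<in>S. R a a"
    "\<forall>a\<in>S. \<forall>b\<in>S. \<forall>c\<in>S. R a b \<longrightarrow> R b c \<longrightarrow> R a c" "\<forall>a\<in>S. \<forall>b\<in>S. R a b \<or> R b a"
  shows "\<exists>v\<in>S. \<forall>w\<in>S. R w v"
  using assms
proof (induction S rule: finite_ne_induct)
  case (singleton x)
  have "R x x" using singleton(1) by blast
  then show ?case by blast
next
  case (insert x F)
  have p3: "\<forall>a\<in>F. R a a" using insert.prems(1) by blast
  have p4: "\<forall>a\<in>F. \<forall>b\<in>F. \<forall>c\<in>F. R a b \<longrightarrow> R b c \<longrightarrow> R a c" 
  proof (intro ballI impI)
    fix a b c assume "a \<in> F" "b \<in> F" "c \<in> F" "R a b" "R b c"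
    then show "R a c" using insert.prems(2)[rule_format, of a b c] by simp
  qed
  have p5: "\<forall>a\<in>F. \<forall>b\<in>F. R a b \<or> R b a" using insert.prems(3) by blast
  obtain v where v: "v \<in> F" "\<forall>w\<in>F. R w v" using insert.IH[OF p3 p4 p5] by blast
  show ?case
  proof (cases "R x v")
    case True
    then have "\<forall>w\<in>insert x F. R w v" using v by simp
    then show ?thesis using v(1) by blast
  next
    case False
    have "R x v \<or> R v x" using insert.prems(3) v(1) by blast
    then have vx: "R v x" using False by simp
    have "\<forall>w\<in>insert x F. R w x"
    proof
      fix w assume w: "w \<in> insert x F"
      show "R w x"
      proof (cases "w = x")
        case True then show ?thesis using insert.prems(1) by simp
      next
        case False
        then have "w \<in> F" using w by blast
        then have "R w v" using v by blast
        then show ?thesis using vx insert.prems(2)[rule_format, of w v x] \<open>w \<in> F\<close> v(1) by blast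
      qed
    qed
    then show ?thesis by blast
  qed
qed

lemma LT_eqI:
  assumes "m v \<noteq> 0" "\<forall>w. m w \<noteq> 0 \<longrightarrow> tle w v" "\<forall>w. m w \<noteq> 0 \<longrightarrow> tle v w \<longrightarrow> w = v"
  shows "LT tle m = v"
  unfolding LT_def
proof (rule the_equality)
  show "m v \<noteq> 0 \<and> (\<forall>w. m w \<noteq> 0 \<longrightarrow> tle w v)" using assms(1,2) by blast
next
  fix x assume x: "m x \<noteq> 0 \<and> (\<forall>w. m w \<noteq> 0 \<longrightarrow> tle w x)"
  then have "tle v x" using assms(1) by blast
  then show "x = v" using x assms(3) by blast
qed


lemma tquot_eq_iff: "tdvd b u \<Longrightarrow> (tquot u b = x) = (u = tmul x b)"
  unfolding tdvd_def tquot_def tmul_def fun_eq_iff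
proof -
  assume h: "\<forall>x. b x \<le> u x"
  show "(\<forall>y. u y - b y = x y) = (\<forall>y. u y = x y + b y)"
  proof
    assume "\<forall>y. u y - b y = x y"
    then show "\<forall>y. u y = x y + b y" using h by (metis le_add_diff_inverse2)
  next
    assume "\<forall>y. u y = x y + b y"
    then show "\<forall>y. u y - b y = x y" by simp
  qed
qed

lemma Syz_D:
  assumes "m \<in> Syz n s t gam c"
  shows "in_Fprime n s m"
    "(\<Sum>i\<in>{i\<in>{1..s}. gam i = K \<and> tdvd (t i) u}. m (tquot u (t i), i) * c i) = 0"
  using assms unfolding Syz_def by auto

lemma LT_Syz:
  assumes mto: "module_term_ordering n r le"
    and vt: "\<forall>i\<in>{1..s}. valid_term n (t i)" and vg: "\<forall>i\<in>{1..s}. gam i \<in> {1..r}"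
    and m: "m \<in> Syz n s t gam c" "m \<noteq> (\<lambda>_. 0)"
  shows "m (LT (tau_le le t gam) m) \<noteq> 0 \<and>
     (\<forall>w. m w \<noteq> 0 \<longrightarrow> tau_le le t gam w (LT (tau_le le t gam) m))"
proof -
  let ?R = "tau_le le t gam"
  define S where "S = {v. m v \<noteq> 0}"
  have F: "in_Fprime n s m" using Syz_D(1)[OF m(1)] .
  have fin: "finite S" using F unfolding in_Fprime_def S_def by blast
  have ne: "S \<noteq> {}" using m(2) unfolding S_def by auto
  have SV: "\<And>u i. (u, i) \<in> S \<Longrightarrow> valid_term n u \<and> i \<in> {1..s}"
    using F unfolding in_Fprime_def S_def by blast
  have refl: "\<forall>a\<in>S. ?R a a" unfolding tau_le_def Let_def by simp
  have trans: "\<forall>a\<in>S. \<forall>b\<in>S. \<forall>c\<in>S. ?R a b \<longrightarrow> ?R b c \<longrightarrow> ?R a c"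
  proof (intro ballI impI)
    fix a b c assume "a \<in> S" "b \<in> S" "c \<in> S" "?R a b" "?R b c"
    then show "?R a c" using tle_trans[OF mto vt vg, of "fst a" "snd a" "fst b" "snd b" "fst c" "snd c"]
      SV[of "fst a" "snd a"] SV[of "fst b" "snd b"] SV[of "fst c" "snd c"] by simp
  qed
  have total: "\<forall>a\<in>S. \<forall>b\<in>S. ?R a b \<or> ?R b a"
  proof (intro ballI)
    fix a b assume "a \<in> S" "b \<in> S"
    then show "?R a b \<or> ?R b a" using tle_total[OF mto vt vg, of "fst a" "snd a" "fst b" "snd b"]
      SV[of "fst a" "snd a"] SV[of "fst b" "snd b"] by simp
  qed
  obtain v where v: "v \<in> S" "\<forall>w\<in>S. ?R w v" using finite_max[OF fin ne refl trans total] by blast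
  have "LT ?R m = v"
  proof (rule LT_eqI)
    show "m v \<noteq> 0" using v S_def by simp
    show "\<forall>w. m w \<noteq> 0 \<longrightarrow> ?R w v" using v S_def by simp
    show "\<forall>w. m w \<noteq> 0 \<longrightarrow> ?R v w \<longrightarrow> w = v"
    proof (intro allI impI)
      fix w assume "m w \<noteq> 0" "?R v w"
      then have "w \<in> S" using S_def by simp
      then have "?R w v" using v(2) by blast
      then show "w = v" using tle_antisym[OF mto vt vg, of "fst w" "snd w" "fst v" "snd v"]
        SV[of "fst w" "snd w"] SV[of "fst v" "snd v"] v(1) \<open>?R v w\<close> \<open>w \<in> S\<close> by simp
    qed
  qed
  then show ?thesis using v S_def by simp
qed

lemma Schreyer:
  assumes mto: "module_term_ordering n r le"
    and vt: "\<forall>i\<in>{1..s}. valid_term n (t i)" and vg: "\<forall>i\<in>{1..s}. gam i \<in> {1..r}"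
    and cz: "\<forall>i\<in>{1..s}. c i \<noteq> 0"
    and m: "m \<in> Syz n s t gam c" "m \<noteq> (\<lambda>_. 0)"
    and lt: "LT (tau_le le t gam) m = (u, k)"
  shows "\<exists>i. 1 \<le> i \<and> i < k \<and> gam i = gam k \<and> tdvd (t i) (tmul u (t k))"
proof -
  have L: "m (u, k) \<noteq> 0" "\<forall>w. m w \<noteq> 0 \<longrightarrow> tau_le le t gam w (u, k)"
    using LT_Syz[OF mto vt vg m] lt by auto
  have F: "in_Fprime n s m" using Syz_D(1)[OF m(1)] .
  have k: "k \<in> {1..s}" using F L(1) unfolding in_Fprime_def by blast
  define w where "w = tmul u (t k)"
  define I where "I = {i\<in>{1..s}. gam i = gam k \<and> tdvd (t i) w}"
  define f where "f = (\<lambda>i. m (tquot w (t i), i) * c i)"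
  have sum0: "sum f I = 0" using Syz_D(2)[OF m(1), where K="gam k" and u=w] unfolding I_def f_def by simp
  have kI: "k \<in> I" unfolding I_def w_def using k tdvd_tmul by auto
  have finI: "finite I" unfolding I_def by simp
  have fk: "f k \<noteq> 0" unfolding f_def w_def tquot_tmul using L(1) cz k by simp
  have "\<exists>j\<in>I - {k}. f j \<noteq> 0"
  proof (rule ccontr)
    assume "\<not> ?thesis"
    then have "sum f (I - {k}) = 0" by (intro sum.neutral) blast
    then have "sum f I = f k" using sum.remove[OF finI kI, of f] by simp
    then show False using sum0 fk by simp
  qed
  then obtain j where j: "j \<in> I" "j \<noteq> k" "f j \<noteq> 0" by blast
  have mj: "m (tquot w (t j), j) \<noteq> 0" using j(3) unfolding f_def by auto
  have R: "tau_le le t gam (tquot w (t j), j) (u, k)" using L(2) mj by blast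
  have jd: "tdvd (t j) w" "gam j = gam k" "1 \<le> j" using j(1) unfolding I_def by auto
  have "tmul (tquot w (t j)) (t j) = tmul u (t k)" using tmul_tquot[OF jd(1)] w_def by simp
  then have "j \<le> k" using R jd(2) unfolding tau_le_def Let_def by simp
  then show ?thesis using j(2) jd w_def by (intro exI[of _ j]) auto
qed




lemma tlcm_comm: "tlcm a b = tlcm b a"
  by (auto simp: tlcm_def fun_eq_iff)

lemma tij_mul: "tmul (tij t i k) (t i) = tlcm (t i) (t k)"
  by (auto simp: tij_def tmul_def tquot_def tlcm_def fun_eq_iff)

lemma tdvd_lcm1: "tdvd a (tlcm a b)" by (auto simp: tdvd_def tlcm_def)
lemma tdvd_lcm2: "tdvd b (tlcm a b)" by (auto simp: tdvd_def tlcm_def)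

lemma g_at_k:
  assumes "i \<noteq> k" "c k \<noteq> 0"
  shows "- c k * crit_syz t c i k (tij t k i, k) = 1"
  using assms unfolding crit_syz_def by simp

lemma g_at_i:
  assumes "i \<noteq> k"
  shows "- c k * crit_syz t c i k (tij t i k, i) = - c k / c i"
  using assms unfolding crit_syz_def by simp

lemma g_supp:
  assumes "- c k * crit_syz t c i k v \<noteq> 0"
  shows "v = (tij t i k, i) \<or> v = (tij t k i, k)"
  using assms unfolding crit_syz_def by (cases v) (auto split: if_splits)

lemma g_in_Syz:
  fixes c :: "nat \<Rightarrow> 'a::field"
  assumes vt: "\<forall>i\<in>{1..s}. valid_term n (t i)" and cz: "\<forall>i\<in>{1..s}. c i \<noteq> 0"
    and ik: "(i, k) \<in> Sigma0 s gam"
  shows "(\<lambda>v. - c k * crit_syz t c i k v) \<in> Syz n s t gam c"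
proof -
  let ?g = "\<lambda>v. - c k * crit_syz t c i k v"
  have i: "1 \<le> i" "i < k" "k \<le> s" "gam i = gam k" using ik unfolding Sigma0_def by auto
  have vi: "valid_term n (t i)" "valid_term n (t k)" using vt i by auto
  have "in_Fprime n s ?g"
    unfolding in_Fprime_def
  proof
    have "{v. ?g v \<noteq> 0} \<subseteq> {(tij t i k, i), (tij t k i, k)}" using g_supp by blast
    then show "finite {v. ?g v \<noteq> 0}" using finite_subset by blast
    show "\<forall>u j. ?g (u, j) \<noteq> 0 \<longrightarrow> valid_term n u \<and> j \<in> {1..s}"
    proof (intro allI impI)
      fix u j assume "?g (u, j) \<noteq> 0"
      then have "(u, j) = (tij t i k, i) \<or> (u, j) = (tij t k i, k)" using g_supp by blast
      then show "valid_term n u \<and> j \<in> {1..s}" using i vi unfolding tij_def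
        by (auto intro!: valid_tquot valid_tlcm)
    qed
  qed
  moreover have "\<forall>u K. (\<Sum>j\<in>{j\<in>{1..s}. gam j = K \<and> tdvd (t j) u}. ?g (tquot u (t j), j) * c j) = 0"
  proof (intro allI)
    fix u K
    define I where "I = {j\<in>{1..s}. gam j = K \<and> tdvd (t j) u}"
    define L where "L = tlcm (t i) (t k)"
    have eq: "?g (tquot u (t j), j) * c j =
       (if j = i then (if u = L then - c k else 0) else 0) + (if j = k then (if u = L then c k else 0) else 0)"
      if "j \<in> I" for j
    proof -
      have d: "tdvd (t j) u" using that I_def by simp
      have e1: "(tquot u (t j) = tij t i k) = (u = tmul (tij t i k) (t j))" using tquot_eq_iff[OF d] .
      have e2: "(tquot u (t j) = tij t k i) = (u = tmul (tij t k i) (t j))" using tquot_eq_iff[OF d] .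
      have L1: "tmul (tij t i k) (t i) = L" using tij_mul L_def by simp
      have L2: "tmul (tij t k i) (t k) = L" using tij_mul[of t k i] L_def tlcm_comm by metis
      show ?thesis
        using i cz e1 e2 L1 L2 unfolding crit_syz_def by (auto simp: field_simps)
    qed
    have "sum (\<lambda>j. ?g (tquot u (t j), j) * c j) I =
      sum (\<lambda>j. (if j = i then (if u = L then - c k else 0) else 0) + (if j = k then (if u = L then c k else 0) else 0)) I"
      using eq by (rule sum.cong[OF refl])
    also have "\<dots> = (if i \<in> I then (if u = L then - c k else 0) else 0) + (if k \<in> I then (if u = L then c k else 0) else 0)"
      unfolding sum.distrib by (simp add: I_def)
    also have "\<dots> = 0"
    proof (cases "u = L")
      case True
      have "i \<in> I \<longleftrightarrow> k \<in> I" unfolding I_def True L_def using i tdvd_lcm1 tdvd_lcm2 by auto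
      then show ?thesis by auto
    qed simp
    finally show "(\<Sum>j\<in>{j\<in>{1..s}. gam j = K \<and> tdvd (t j) u}. ?g (tquot u (t j), j) * c j) = 0"
      unfolding I_def .
  qed
  ultimately show ?thesis unfolding Syz_def by blast
qed

lemma LT_g:
  assumes ik: "(i, k) \<in> Sigma0 s gam" and cz: "\<forall>i\<in>{1..s}. c i \<noteq> 0"
  shows "LT (tau_le le t gam) (\<lambda>v. - c k * crit_syz t c i k v) = (tij t k i, k)"
proof (rule LT_eqI)
  have i: "1 \<le> i" "i < k" "k \<le> s" "gam i = gam k" using ik unfolding Sigma0_def by auto
  show "- c k * crit_syz t c i k (tij t k i, k) \<noteq> 0" using g_at_k[of i k c t] i cz by simp
  have L1: "tmul (tij t i k) (t i) = tmul (tij t k i) (t k)"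
    using tij_mul[of t i k] tij_mul[of t k i] tlcm_comm by metis
  show "\<forall>w. - c k * crit_syz t c i k w \<noteq> 0 \<longrightarrow> tau_le le t gam w (tij t k i, k)"
  proof (intro allI impI)
    fix w assume "- c k * crit_syz t c i k w \<noteq> 0"
    then have "w = (tij t i k, i) \<or> w = (tij t k i, k)" by (rule g_supp)
    then show "tau_le le t gam w (tij t k i, k)" using L1 i unfolding tau_le_def Let_def by auto
  qed
  show "\<forall>w. - c k * crit_syz t c i k w \<noteq> 0 \<longrightarrow> tau_le le t gam (tij t k i, k) w \<longrightarrow> w = (tij t k i, k)"
  proof (intro allI impI)
    fix w assume "- c k * crit_syz t c i k w \<noteq> 0" "tau_le le t gam (tij t k i, k) w"
    moreover have "w = (tij t i k, i) \<or> w = (tij t k i, k)" using calculation(1) by (rule g_supp)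
    ultimately show "w = (tij t k i, k)" using L1 i unfolding tau_le_def Let_def by auto
  qed
qed




definition tdeg :: "nat \<Rightarrow> (nat \<Rightarrow> nat) \<Rightarrow> nat" where
  "tdeg n a = sum a {..<n}"

lemma tdeg_mono: "tdvd a b \<Longrightarrow> tdeg n a \<le> tdeg n b"
  unfolding tdeg_def tdvd_def by (intro sum_mono) auto

lemma tdeg_strict:
  assumes "valid_term n a" "valid_term n b" "tdvd a b" "a \<noteq> b"
  shows "tdeg n a < tdeg n b"
proof -
  obtain x where x: "a x \<noteq> b x" using assms(4) by (auto simp: fun_eq_iff)
  have "x < n" using x assms(1,2) unfolding valid_term_def by (metis not_le)
  then show ?thesis unfolding tdeg_def using assms(3) x unfolding tdvd_def
    by (intro sum_strict_mono_ex1) (auto intro!: bexI[of _ x] simp: le_neq_implies_less)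
qed

lemma tdvd_trans: "tdvd a b \<Longrightarrow> tdvd b c \<Longrightarrow> tdvd a c"
  unfolding tdvd_def using le_trans by blast

lemma tdvd_refl: "tdvd a a" unfolding tdvd_def by simp

lemma valid_tij: "valid_term n (t i) \<Longrightarrow> valid_term n (t k) \<Longrightarrow> valid_term n (tij t k i)"
  unfolding tij_def by (intro valid_tquot valid_tlcm)

lemma minimize:
  assumes vt: "\<forall>i\<in>{1..s}. valid_term n (t i)"
    and i: "1 \<le> i" "i < k" "k \<le> s" "gam i = gam k"
  shows "\<exists>i'. (i', k) \<in> Sigma2 s t gam \<and> tdvd (tij t k i') (tij t k i)"
proof -
  define P where "P = (\<lambda>j. 1 \<le> j \<and> j < k \<and> gam j = gam k \<and> tdvd (tij t k j) (tij t k i))"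
  define f where "f = (\<lambda>j. tdeg n (tij t k j) * (k + 1) + j)"
  have "P i" unfolding P_def using i tdvd_refl by simp
  then obtain i' where i': "P i'" "\<forall>y. P y \<longrightarrow> f i' \<le> f y"
    using ex_has_least_nat[of P i f] by blast
  have p: "1 \<le> i'" "i' < k" "gam i' = gam k" "tdvd (tij t k i') (tij t k i)" using i'(1) P_def by auto
  have v: "\<And>j. 1 \<le> j \<Longrightarrow> j \<le> k \<Longrightarrow> valid_term n (tij t k j)"
    using vt i(3) valid_tij by (metis atLeastAtMost_iff le_trans)
  have r1: "\<not> rule1_del t gam i' k"
  proof
    assume "rule1_del t gam i' k"
    then obtain j where j: "j \<in> {1..<i'}" "gam j = gam k" "tdvd (tij t k j) (tij t k i')"
      unfolding rule1_del_def by blast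
    have "P j" unfolding P_def using j p tdvd_trans by auto
    then have "f i' \<le> f j" using i'(2) by blast
    moreover have "tdeg n (tij t k j) \<le> tdeg n (tij t k i')" using tdeg_mono j(3) by blast
    then have "tdeg n (tij t k j) * (k + 1) \<le> tdeg n (tij t k i') * (k + 1)" by (rule mult_right_mono) simp
    ultimately show False using j(1) unfolding f_def by simp
  qed
  have r2: "\<not> rule2_del t gam i' k"
  proof
    assume "rule2_del t gam i' k"
    then obtain j where j: "j \<in> {i'<..<k}" "gam j = gam k" "tdvd (tij t k j) (tij t k i')"
      "tij t k j \<noteq> tij t k i'"
      unfolding rule2_del_def by blast
    have "P j" unfolding P_def using j p tdvd_trans by auto
    then have "f i' \<le> f j" using i'(2) by blast
    moreover have "tdeg n (tij t k j) < tdeg n (tij t k i')"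
      using tdeg_strict[OF v v j(3,4)] j(1) p by auto
    then have "(tdeg n (tij t k j) + 1) * (k + 1) \<le> tdeg n (tij t k i') * (k + 1)"
      by (intro mult_right_mono) auto
    ultimately show False using j(1) unfolding f_def by simp
  qed
  have "(i', k) \<in> Sigma2 s t gam"
    unfolding Sigma2_def Sigma1_def Sigma0_def using p i r1 r2 by auto
  then show ?thesis using p by blast
qed




theorem proposition4p5:
  fixes n r s :: nat
    and le :: "mterm \<Rightarrow> mterm \<Rightarrow> bool"
    and t :: "nat \<Rightarrow> nat \<Rightarrow> nat"
    and gam :: "nat \<Rightarrow> nat"
    and c :: "nat \<Rightarrow> 'a::field"
  assumes "module_term_ordering n r le"
    and "\<forall>i\<in>{1..s}. valid_term n (t i)"
    and "\<forall>i\<in>{1..s}. gam i \<in> {1..r}"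
    and "\<forall>i\<in>{1..s}. c i \<noteq> 0"
  shows "is_reduced_GB (tau_le le t gam) (Syz n s t gam c)
           ((\<lambda>(i, j). (\<lambda>v. - c j * crit_syz t c i j v)) ` Sigma2 s t gam)"
proof -
  note mto = assms(1) and vt = assms(2) and vg = assms(3) and cz = assms(4)
  let ?R = "tau_le le t gam"
  let ?M = "Syz n s t gam c"
  define g where "g = (\<lambda>i j. (\<lambda>v. - c j * crit_syz t c i j v))"
  let ?G = "(\<lambda>(i, j). (\<lambda>v. - c j * crit_syz t c i j v)) ` Sigma2 s t gam"
  have G: "?G = (\<lambda>(i, j). g i j) ` Sigma2 s t gam" unfolding g_def by simp
  have S20: "\<And>i k. (i, k) \<in> Sigma2 s t gam \<Longrightarrow> (i, k) \<in> Sigma0 s gam"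
    unfolding Sigma2_def Sigma1_def by blast
  have S2r: "\<And>i k. (i, k) \<in> Sigma2 s t gam \<Longrightarrow> \<not> rule1_del t gam i k \<and> \<not> rule2_del t gam i k"
    unfolding Sigma2_def Sigma1_def by blast
  have S0: "\<And>i k. (i, k) \<in> Sigma0 s gam \<Longrightarrow> 1 \<le> i \<and> i < k \<and> k \<le> s \<and> gam i = gam k"
    unfolding Sigma0_def by blast
  have LTg: "\<And>i k. (i, k) \<in> Sigma2 s t gam \<Longrightarrow> LT ?R (g i k) = (tij t k i, k)"
    unfolding g_def using LT_g S20 cz by blast
  have gk: "\<And>i k. (i, k) \<in> Sigma2 s t gam \<Longrightarrow> g i k (tij t k i, k) = 1"
    unfolding g_def using g_at_k S20 S0 cz by (metis atLeastAtMost_iff le_trans less_irrefl order.strict_implies_order)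
  have fin: "finite (Sigma2 s t gam)"
  proof (rule finite_subset)
    show "Sigma2 s t gam \<subseteq> {1..s} \<times> {1..s}" using S20 S0 by fastforce
  qed simp
  have isGB: "is_GB ?R ?M ?G"
    unfolding is_GB_def
  proof (intro conjI)
    show "finite ?G" using fin by simp
    show "?G \<subseteq> ?M" using g_in_Syz[OF vt cz] S20 by fast
    show "\<forall>x\<in>?G. x \<noteq> (\<lambda>_. 0)"
    proof
      fix x assume "x \<in> ?G"
      then obtain i k where ik: "(i, k) \<in> Sigma2 s t gam" "x = g i k" unfolding G by auto
      then show "x \<noteq> (\<lambda>_. 0)" using gk[OF ik(1)] by (metis zero_neq_one)
    qed
    show "\<forall>m\<in>?M. m \<noteq> (\<lambda>_. 0) \<longrightarrow> (\<exists>x\<in>?G. mdvd (LT ?R x) (LT ?R m))"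
    proof (intro ballI impI)
      fix m assume m: "m \<in> ?M" "m \<noteq> (\<lambda>_. 0)"
      obtain u k where lt: "LT ?R m = (u, k)" by (cases "LT ?R m")
      have mk: "m (u, k) \<noteq> 0" using LT_Syz[OF mto vt vg m] lt by simp
      have ks: "k \<le> s" using Syz_D(1)[OF m(1)] mk unfolding in_Fprime_def by auto
      obtain i where i: "1 \<le> i" "i < k" "gam i = gam k" "tdvd (t i) (tmul u (t k))"
        using Schreyer[OF mto vt vg cz m lt] by blast
      have d1: "tdvd (tij t k i) u" using i(4) unfolding tdvd_def tij_def tquot_def tlcm_def tmul_def
      proof (intro allI)
        fix y assume "\<forall>x. t i x \<le> u x + t k x"
        then have "t i y \<le> u y + t k y" by blast
        then show "max (t k y) (t i y) - t k y \<le> u y" by linarith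
      qed
      obtain i' where i': "(i', k) \<in> Sigma2 s t gam" "tdvd (tij t k i') (tij t k i)"
        using minimize[OF vt i(1,2) ks i(3)] by blast
      have "mdvd (LT ?R (g i' k)) (LT ?R m)"
        unfolding LTg[OF i'(1)] lt mdvd_def using tdvd_trans[OF i'(2) d1] by simp
      moreover have "g i' k \<in> ?G" unfolding G using i'(1) by force
      ultimately show "\<exists>x\<in>?G. mdvd (LT ?R x) (LT ?R m)" by blast
    qed
  qed
  have monic: "\<forall>x\<in>?G. LC ?R x = 1"
  proof
    fix x assume "x \<in> ?G"
    then obtain i k where ik: "(i, k) \<in> Sigma2 s t gam" "x = g i k" unfolding G by auto
    show "LC ?R x = 1" unfolding LC_def ik(2) LTg[OF ik(1)] gk[OF ik(1)] ..
  qed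
  have minimal: "\<forall>x\<in>?G. \<forall>y\<in>?G. x \<noteq> y \<longrightarrow> \<not> mdvd (LT ?R y) (LT ?R x)"
  proof (intro ballI impI notI)
    fix x y assume "x \<in> ?G" "y \<in> ?G" "x \<noteq> y" "mdvd (LT ?R y) (LT ?R x)"
    then obtain i k i' k' where ik: "(i, k) \<in> Sigma2 s t gam" "x = g i k"
      and ik': "(i', k') \<in> Sigma2 s t gam" "y = g i' k'" unfolding G by auto
    have kk: "k' = k" and dv: "tdvd (tij t k i') (tij t k i)"
      using \<open>mdvd (LT ?R y) (LT ?R x)\<close> unfolding ik(2) ik'(2) LTg[OF ik(1)] LTg[OF ik'(1)] mdvd_def
      by auto
    have ne: "i' \<noteq> i" using \<open>x \<noteq> y\<close> ik ik' kk by blast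
    have p: "1 \<le> i" "i < k" "gam i = gam k" "1 \<le> i'" "i' < k" "gam i' = gam k"
      using S0[OF S20[OF ik(1)]] S0[OF S20[OF ik'(1)]] kk by auto
    show False
    proof (cases "i' < i")
      case True
      then have "rule1_del t gam i k" unfolding rule1_del_def using p dv by auto
      then show False using S2r[OF ik(1)] by blast
    next
      case False
      then have gt: "i < i'" using ne by simp
      show False
      proof (cases "tij t k i' = tij t k i")
        case True
        then have "rule1_del t gam i' k" unfolding rule1_del_def using p gt tdvd_refl by auto
        then show False using S2r ik'(1) kk by blast
      next
        case False
        then have "rule2_del t gam i k" unfolding rule2_del_def using p gt dv by auto
        then show False using S2r[OF ik(1)] by blast
      qed
    qed
  qed
  have reduced: "\<forall>x\<in>?G. \<forall>v. x v \<noteq> 0 \<and> v \<noteq> LT ?R x \<longrightarrow> \<not> in_LT_module ?R ?M v"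
  proof (intro ballI allI impI notI)
    fix x v assume "x \<in> ?G" "x v \<noteq> 0 \<and> v \<noteq> LT ?R x" "in_LT_module ?R ?M v"
    then obtain i k where ik: "(i, k) \<in> Sigma2 s t gam" "x = g i k" unfolding G by auto
    have "v = (tij t i k, i) \<or> v = (tij t k i, k)"
      using \<open>x v \<noteq> 0 \<and> v \<noteq> LT ?R x\<close> g_supp unfolding ik(2) g_def by blast
    then have v: "v = (tij t i k, i)" using \<open>x v \<noteq> 0 \<and> v \<noteq> LT ?R x\<close> LTg[OF ik(1)] ik(2) by auto
    obtain m where m: "m \<in> ?M" "m \<noteq> (\<lambda>_. 0)" "mdvd (LT ?R m) v"
      using \<open>in_LT_module ?R ?M v\<close> unfolding in_LT_module_def by blast
    obtain u k' where lt: "LT ?R m = (u, k')" by (cases "LT ?R m")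
    have k': "k' = i" "tdvd u (tij t i k)" using m(3) unfolding lt v mdvd_def by auto
    obtain j where j: "1 \<le> j" "j < i" "gam j = gam i" "tdvd (t j) (tmul u (t i))"
      using Schreyer[OF mto vt vg cz m(1,2) lt] k'(1) by blast
    have p: "gam i = gam k" using S0[OF S20[OF ik(1)]] by simp
    have "tdvd (tij t k j) (tij t k i)"
      using j(4) k'(2) unfolding tdvd_def tij_def tquot_def tlcm_def tmul_def
    proof (intro allI)
      fix y assume a: "\<forall>x. t j x \<le> u x + t i x" "\<forall>x. u x \<le> max (t i x) (t k x) - t i x"
      have "t j y \<le> u y + t i y" "u y \<le> max (t i y) (t k y) - t i y" using a by auto
      then show "max (t k y) (t j y) - t k y \<le> max (t k y) (t i y) - t k y" by linarith
    qed
    then have "rule1_del t gam i k" unfolding rule1_del_def using j p by auto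
    then show False using S2r[OF ik(1)] by blast
  qed
  show ?thesis unfolding is_reduced_GB_def using isGB monic minimal reduced by blast
qed


end
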